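(* Let $n\ge 2$. Let $\Theta\subset\mathbb{R}^{n+\binom{n}{2}}$ be the set of all pairs $(\boldsymbol{\lambda},G)$, where $\boldsymbol{\lambda}=(\lambda_1,\dots,\lambda_n)$ consists of non-zero reals with $\lambda_p\ne\pm\lambda_q$ for $p\ne q$, and $G=(g_{pq})$ is a real symmetric $n\times n$ matrix with $g_{pp}=1$, such that the following hold for $G$ and the matrix $H=(h_{pq})$ defined by $h_{pp}=1$ and $h_{pq}=\frac{2\lambda_p(\lambda_pg_{pq}-\lambda_q)}{\lambda_p^2-\lambda_q^2}$ for $p\ne q$: (i) $G$ is non-degenerate indefinite with negative index of inertia $1$, and all principal minors of $G$ of sizes $2\times2,\dots,(n-1)\times(n-1)$ are strictly positive; (ii) $\sum_{q=1}^n\sum_{r=1}^ng^{qr}h_{pq}h_{pr}<0$ for $p=1,\dots,n$, where $(g^{qr})=G^{-1}$. Then $\Theta$ is non-empty.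
   Context: (By the paper's construction, points of $\Theta$ correspond to flexible cross-polytopes in Lobachevsky space $\Lambda^n$ of the simplest type, in which all tangents of half dihedral angles at one facet stay proportional.) *)

theory Defs
  imports "HOL-Analysis.Analysis"
begin

definition qform :: "real^'n^'n \<Rightarrow> real^'n \<Rightarrow> real" where
  "qform G x = x \<bullet> (G *v x)"

text \<open>Negative index of inertia: maximal dimension of a subspace on which the
  quadratic form is negative definite (Sylvester).\<close>
definition neg_index :: "real^'n^'n \<Rightarrow> nat" where
  "neg_index G = Max {dim V | V. subspace V \<and> (\<forall>x\<in>V. x \<noteq> 0 \<longrightarrow> qform G x < 0)}"

definition principal_minor :: "real^'n^'n \<Rightarrow> 'n set \<Rightarrow> real" where
  "principal_minor G S = (\<Sum>p | p permutes S. of_int (sign p) * (\<Prod>i\<in>S. G $ i $ p i))"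

definition Hmat :: "real^'n \<Rightarrow> real^'n^'n \<Rightarrow> real^'n^'n" where
  "Hmat l G = (\<chi> p q. if p = q then 1
      else 2 * l$p * (l$p * G$p$q - l$q) / ((l$p)^2 - (l$q)^2))"

definition Theta :: "((real^'n) \<times> (real^'n^'n)) set" where
  "Theta = {(l :: real^'n, G :: real^'n^'n).
     (\<forall>p. l$p \<noteq> 0) \<and> (\<forall>p q. p \<noteq> q \<longrightarrow> l$p \<noteq> l$q \<and> l$p \<noteq> - l$q) \<and>
     transpose G = G \<and> (\<forall>p. G$p$p = 1) \<and>
     det G \<noteq> 0 \<and> (\<exists>x. qform G x > 0) \<and> (\<exists>x. qform G x < 0) \<and>
     neg_index G = 1 \<and>
     (\<forall>S. 2 \<le> card S \<and> card S \<le> CARD('n) - 1 \<longrightarrow> principal_minor G S > 0) \<and>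
     (\<forall>p. (\<Sum>q\<in>UNIV. \<Sum>r\<in>UNIV. matrix_inv G $ q $ r * Hmat l G $ p $ q * Hmat l G $ p $ r) < 0)}"

end

theory Submission
  imports Defs
begin


lemma det_row_op_sum:
  fixes A :: "real^'n^'n"
  assumes "finite T" "k \<notin> T"
  shows "det (\<chi> i. if i = k then row k A + (\<Sum>j\<in>T. c j *s row j A) else row i A) = det A"
  using assms
proof (induction T rule: finite_induct)
  case empty
  have "(\<chi> i. if i = k then row k A + (\<Sum>j\<in>{}. c j *s row j A) else row i A) = A"
    by (simp add: vec_eq_iff row_def)
  then show ?case by simp
next
  case (insert x F)
  define M where "M = (\<chi> i. if i = k then row k A + (\<Sum>j\<in>F. c j *s row j A) else row i A)"
  have xk: "x \<noteq> k" using insert by auto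
  have rM: "row x M = row x A" "row k M = row k A + (\<Sum>j\<in>F. c j *s row j A)"
    using xk by (simp_all add: M_def row_def vec_eq_iff)
  have "(\<chi> i. if i = k then row k A + (\<Sum>j\<in>insert x F. c j *s row j A) else row i A)
      = (\<chi> i. if i = k then row k M + c x *s row x M else row i M)"
    using insert(1,2) rM by (auto simp add: vec_eq_iff M_def row_def algebra_simps)
  then have "det (\<chi> i. if i = k then row k A + (\<Sum>j\<in>insert x F. c j *s row j A) else row i A) = det M"
    using det_row_operation[of k x M "c x"] xk by simp
  also have "\<dots> = det A" using insert M_def by simp
  finally show ?case .
qed



lemma det_arrow:
  fixes c :: "'n::finite \<Rightarrow> real"
  shows "det (\<chi> i j. if i = j then 1 else if i = k then c j else if j = k then c i else 0 :: real^'n^'n)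
       = 1 - (\<Sum>j\<in>UNIV-{k}. (c j)^2)"
proof -
  define A where "A = (\<chi> i j. if i = j then 1 else if i = k then c j else if j = k then c i else 0 :: real^'n^'n)"
  define d where "d = 1 - (\<Sum>j\<in>UNIV-{k}. (c j)^2)"
  define A1 where "A1 = (\<chi> i. if i = k then row k A + (\<Sum>j\<in>UNIV-{k}. (- c j) *s row j A) else row i A)"
  have dA1: "det A1 = det A" unfolding A1_def by (rule det_row_op_sum) auto
  have A1e: "A1 = (\<chi> i j. if i = k then (if j = k then d else 0) else A$i$j)"
  proof -
    have "(\<Sum>j\<in>UNIV-{k}. - c j * A $ j $ m) = (if m = k then - (\<Sum>j\<in>UNIV-{k}. (c j)^2) else - c m)" for m
    proof (cases "m = k")
      case True
      then show ?thesis by (auto simp: A_def power2_eq_square intro!: sum.cong simp flip: sum_negf)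
    next
      case False
      have "(\<Sum>j\<in>UNIV-{k}. - c j * A $ j $ m) = (\<Sum>j\<in>UNIV-{k}. if j = m then - c m else 0)"
        using False by (intro sum.cong) (auto simp: A_def)
      also have "\<dots> = - c m" using False by (simp add: sum.delta)
      finally show ?thesis using False by simp
    qed
    then show ?thesis
      by (auto simp: vec_eq_iff A1_def row_def d_def A_def sum_component)
  qed
  have tA1: "transpose A1 = (\<chi> i. if i = k then row k B + (\<Sum>j\<in>UNIV-{k}. c j *s row j B) else row i B)"
    if "B = (\<chi> i j. if i = j then (if i = k then d else 1) else 0 :: real^'n^'n)" for B
  proof -
    have "(\<Sum>j\<in>UNIV-{k}. c j * B $ j $ m) = (if m = k then 0 else c m)" for m
    proof (cases "m = k")
      case True
      then show ?thesis using that by (auto intro!: sum.neutral)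
    next
      case False
      have "(\<Sum>j\<in>UNIV-{k}. c j * B $ j $ m) = (\<Sum>j\<in>UNIV-{k}. if j = m then c m else 0)"
        using False that by (intro sum.cong) auto
      also have "\<dots> = c m" using False by (simp add: sum.delta)
      finally show ?thesis using False by simp
    qed
    then show ?thesis using that
      by (auto simp: vec_eq_iff A1e row_def transpose_def A_def sum_component)
  qed
  define B where "B = (\<chi> i j. if i = j then (if i = k then d else 1) else 0 :: real^'n^'n)"
  have "det A = det (transpose A1)" using dA1 by simp
  also have "\<dots> = det B" using tA1[OF B_def] by (simp add: det_row_op_sum)
  also have "\<dots> = (\<Prod>i\<in>UNIV. B$i$i)" by (rule det_diagonal) (simp add: B_def)
  also have "\<dots> = d" by (simp add: B_def prod.delta')
  finally show ?thesis unfolding A_def d_def .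
qed



lemma principal_minor_det:
  fixes G :: "real^'n^'n"
  shows "principal_minor G S = det (\<chi> i j. if i \<in> S \<and> j \<in> S then G$i$j else if i = j then 1 else 0 :: real^'n^'n)"
proof -
  define A where "A = (\<chi> i j. if i \<in> S \<and> j \<in> S then G$i$j else if i = j then 1 else 0 :: real^'n^'n)"
  have sub: "{p. p permutes S} \<subseteq> {p. p permutes (UNIV::'n set)}"
    by (auto intro: permutes_subset)
  have eq: "(\<Prod>i\<in>S. G $ i $ p i) = (\<Prod>i\<in>UNIV. A $ i $ p i)" if p: "p permutes S" for p
  proof -
    have "(\<Prod>i\<in>UNIV. A $ i $ p i) = (\<Prod>i\<in>S. A $ i $ p i) * (\<Prod>i\<in>UNIV-S. A $ i $ p i)"
      using prod.subset_diff[of S UNIV "\<lambda>i. A $ i $ p i"] by (simp add: mult.commute)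
    also have "(\<Prod>i\<in>UNIV-S. A $ i $ p i) = 1"
      using p by (intro prod.neutral) (auto simp: A_def permutes_def)
    also have "(\<Prod>i\<in>S. A $ i $ p i) = (\<Prod>i\<in>S. G $ i $ p i)"
      using p by (intro prod.cong) (auto simp: A_def permutes_in_image)
    finally show ?thesis by simp
  qed
  have zero: "of_int (sign p) * (\<Prod>i\<in>UNIV. A $ i $ p i) = 0"
    if "p \<in> {p. p permutes (UNIV::'n set)} - {p. p permutes S}" for p
  proof -
    from that have pU: "p permutes UNIV" and npS: "\<not> p permutes S" by auto
    have "\<exists>i. i \<notin> S \<and> p i \<noteq> i"
    proof (rule ccontr)
      assume "\<not> ?thesis"
      then have "p permutes S" using permutes_superset[OF pU] by auto
      with npS show False by simp
    qed
    then obtain i where "i \<notin> S" "p i \<noteq> i" by blast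
    then have "A $ i $ p i = 0" by (simp add: A_def)
    then have "(\<Prod>i\<in>UNIV. A $ i $ p i) = 0" by (meson UNIV_I finite prod_zero)
    then show ?thesis by simp
  qed
  have "det A = (\<Sum>p\<in>{p. p permutes S}. of_int (sign p) * (\<Prod>i\<in>UNIV. A $ i $ p i))"
    unfolding det_def
    by (rule sum.mono_neutral_right) (use sub zero in \<open>auto simp: finite_permutations\<close>)
  also have "\<dots> = principal_minor G S"
    unfolding principal_minor_def using eq by (intro sum.cong) auto
  finally show ?thesis unfolding A_def by simp
qed



definition Gm :: "'n \<Rightarrow> real \<Rightarrow> real^'n^'n" where
  "Gm s a = (\<chi> i j. if i = j then 1 else if i = s then a else if j = s then a else 0)"
definition wv :: "'n \<Rightarrow> real \<Rightarrow> real^'n" where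
  "wv s a = (\<chi> q. if q = s then -1 else a)"
definition Gi :: "'n \<Rightarrow> real \<Rightarrow> real \<Rightarrow> real^'n^'n" where
  "Gi s a b = (\<chi> q r. (if q = r \<and> q \<noteq> s then 1 else 0) - wv s a $ q * wv s a $ r / b)"

lemma sum_split_s:
  fixes f :: "'n::finite \<Rightarrow> real"
  shows "(\<Sum>k\<in>UNIV. f k) = f s + (\<Sum>k\<in>UNIV-{s}. f k)"
  by (simp add: sum.remove)

lemma Gw:
  fixes s :: "'n::finite"
  assumes "(real CARD('n) - 1) * a^2 = 1 + b"
  shows "(\<Sum>k\<in>UNIV. Gm s a $ i $ k * wv s a $ k) = (if i = s then b else 0)"
proof (cases "i = s")
  case True
  have "(\<Sum>k\<in>UNIV. Gm s a $ i $ k * wv s a $ k) = -1 + (\<Sum>k\<in>UNIV-{s}. a^2)"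
    using True by (subst sum_split_s[of _ s]) (auto simp: Gm_def wv_def power2_eq_square intro!: sum.cong)
  also have "\<dots> = -1 + (real CARD('n) - 1) * a^2"
    by (simp add: card_Diff_singleton of_nat_diff card_ge_0_finite Suc_leI)
  finally show ?thesis using True assms by simp
next
  case False
  have "(\<Sum>k\<in>UNIV. Gm s a $ i $ k * wv s a $ k) = (\<Sum>k\<in>UNIV. (if k = i then a else 0) + (if k = s then -a else 0))"
    using False by (intro sum.cong) (auto simp: Gm_def wv_def)
  also have "\<dots> = 0" by (simp add: sum.distrib)
  finally show ?thesis using False by simp
qed

lemma Gm_Gi:
  fixes s :: "'n::finite"
  assumes "(real CARD('n) - 1) * a^2 = 1 + b" "b \<noteq> 0"
  shows "Gm s a ** Gi s a b = mat 1"
proof -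
  have "(\<Sum>k\<in>UNIV. Gm s a $ i $ k * Gi s a b $ k $ j) = (if i = j then 1 else 0)" for i j
  proof -
    have "(\<Sum>k\<in>UNIV. Gm s a $ i $ k * Gi s a b $ k $ j)
        = (\<Sum>k\<in>UNIV. (if k = j \<and> j \<noteq> s then Gm s a $ i $ j else 0)) - (\<Sum>k\<in>UNIV. Gm s a $ i $ k * wv s a $ k) * wv s a $ j / b"
    proof -
      have "(\<Sum>k\<in>UNIV. Gm s a $ i $ k * Gi s a b $ k $ j) = (\<Sum>k\<in>UNIV. (if k = j \<and> j \<noteq> s then Gm s a $ i $ j else 0) - (Gm s a $ i $ k * wv s a $ k) * (wv s a $ j / b))"
        by (intro sum.cong) (auto simp: Gi_def algebra_simps)
      also have "\<dots> = (\<Sum>k\<in>UNIV. (if k = j \<and> j \<noteq> s then Gm s a $ i $ j else 0)) - (\<Sum>k\<in>UNIV. Gm s a $ i $ k * wv s a $ k) * (wv s a $ j / b)"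
        by (simp only: sum_subtractf sum_distrib_right)
      finally show ?thesis by simp
    qed
    also have "\<dots> = (if j \<noteq> s then Gm s a $ i $ j else 0) - (if i = s then b else 0) * wv s a $ j / b"
      using Gw[OF assms(1)] by simp
    also have "\<dots> = (if i = j then 1 else 0)"
      using assms(2) by (auto simp: Gm_def wv_def)
    finally show ?thesis .
  qed
  then show ?thesis by (simp add: matrix_matrix_mult_def mat_def vec_eq_iff)
qed

lemma matrix_inv_eq:
  fixes A B :: "real^'n^'n"
  assumes "A ** B = mat 1"
  shows "matrix_inv A = B" "invertible A"
proof -
  have BA: "B ** A = mat 1" using assms matrix_left_right_inverse by blast
  show inv: "invertible A" unfolding invertible_def using assms BA by blast
  have "A ** matrix_inv A = mat 1 \<and> matrix_inv A ** A = mat 1"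
    unfolding matrix_inv_def by (rule someI_ex) (use inv in \<open>simp add: invertible_def\<close>)
  then have "matrix_inv A ** A = mat 1" by blast
  then have "(matrix_inv A ** A) ** B = B" by simp
  then show "matrix_inv A = B" by (simp add: matrix_mul_assoc[symmetric] assms)
qed



lemma Gm_mult:
  fixes s :: "'n::finite"
  shows "(Gm s a *v x) $ q = x$q + (if q = s then a * (\<Sum>k\<in>UNIV-{s}. x$k) else a * x$s)"
proof (cases "q = s")
  case True
  have "(Gm s a *v x) $ q = (\<Sum>k\<in>UNIV. Gm s a $ q $ k * x$k)" by (simp add: matrix_vector_mult_def)
  also have "\<dots> = x$s + (\<Sum>k\<in>UNIV-{s}. a * x$k)"
    using True by (subst sum_split_s[of _ s]) (auto simp: Gm_def intro!: sum.cong)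
  finally show ?thesis using True by (simp add: sum_distrib_left)
next
  case False
  have "(Gm s a *v x) $ q = (\<Sum>k\<in>UNIV. Gm s a $ q $ k * x$k)" by (simp add: matrix_vector_mult_def)
  also have "\<dots> = (\<Sum>k\<in>UNIV. (if k = q then x$q else 0) + (if k = s then a * x$s else 0))"
    using False by (intro sum.cong) (auto simp: Gm_def)
  also have "\<dots> = x$q + a * x$s" by (simp add: sum.distrib)
  finally show ?thesis using False by simp
qed

lemma qform_Gm:
  fixes s :: "'n::finite"
  shows "qform (Gm s a) x = (\<Sum>q\<in>UNIV. (x$q)^2) + 2 * a * x$s * (\<Sum>k\<in>UNIV-{s}. x$k)"
proof -
  have "qform (Gm s a) x = (\<Sum>q\<in>UNIV. x$q * (Gm s a *v x) $ q)" by (simp add: qform_def inner_vec_def)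
  also have "\<dots> = (\<Sum>q\<in>UNIV. (x$q)^2 + (if q = s then a * x$s * (\<Sum>k\<in>UNIV-{s}. x$k) else a * x$s * x$q))"
    by (intro sum.cong) (auto simp: Gm_mult algebra_simps power2_eq_square)
  also have "\<dots> = (\<Sum>q\<in>UNIV. (x$q)^2) + (a * x$s * (\<Sum>k\<in>UNIV-{s}. x$k) + (\<Sum>q\<in>UNIV-{s}. a * x$s * x$q))"
  proof -
    have "(\<Sum>q\<in>UNIV. if q = s then a * x$s * (\<Sum>k\<in>UNIV-{s}. x$k) else a * x$s * x$q)
        = a * x$s * (\<Sum>k\<in>UNIV-{s}. x$k) + (\<Sum>q\<in>UNIV-{s}. a * x$s * x$q)"
      by (subst sum_split_s[of _ s]) (auto intro!: sum.cong)
    then show ?thesis by (simp add: sum.distrib)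
  qed
  also have "\<dots> = (\<Sum>q\<in>UNIV. (x$q)^2) + 2 * a * x$s * (\<Sum>k\<in>UNIV-{s}. x$k)"
    by (simp add: sum_distrib_left mult_ac)
  finally show ?thesis .
qed

lemma qform_scale: "qform G (c *\<^sub>R x) = c^2 * qform (G::real^'n^'n) x"
  by (simp add: qform_def matrix_vector_mult_scaleR power2_eq_square)

lemma qform_wv:
  fixes s :: "'n::finite"
  assumes "(real CARD('n) - 1) * a^2 = 1 + b"
  shows "qform (Gm s a) (wv s a) = - b"
proof -
  have c: "real (card (UNIV - {s})) = real CARD('n) - 1"
    by (simp add: card_Diff_singleton of_nat_diff card_ge_0_finite Suc_leI)
  have "qform (Gm s a) (wv s a) = (1 + (real CARD('n) - 1) * a^2) + 2 * a * (-1) * ((real CARD('n) - 1) * a)"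
    unfolding qform_Gm using c
    by (subst sum_split_s[of _ s]) (simp add: wv_def)
  then show ?thesis using assms by (simp add: algebra_simps power2_eq_square)
qed

lemma neg_index_Gm:
  fixes s :: "'n::finite"
  assumes "(real CARD('n) - 1) * a^2 = 1 + b" "b > 0"
  shows "neg_index (Gm s a) = 1"
proof -
  define D where "D = {dim V | V. subspace V \<and> (\<forall>x\<in>V. x \<noteq> 0 \<longrightarrow> qform (Gm s a) x < 0)}"
  have w0: "wv s a \<noteq> 0" by (auto simp: wv_def vec_eq_iff)
  have "1 \<in> D"
  proof -
    have "\<forall>x\<in>span {wv s a}. x \<noteq> 0 \<longrightarrow> qform (Gm s a) x < 0"
    proof (intro ballI impI)
      fix x assume "x \<in> span {wv s a}" "x \<noteq> 0"
      then obtain c where c: "x = c *\<^sub>R wv s a" by (auto simp: span_singleton)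
      with \<open>x \<noteq> 0\<close> have "c \<noteq> 0" by auto
      have "qform (Gm s a) x = c^2 * (- b)" unfolding c qform_scale qform_wv[OF assms(1)] by simp
      moreover have "c^2 > 0" using \<open>c \<noteq> 0\<close> by simp
      ultimately show "qform (Gm s a) x < 0" using assms(2) by (simp add: mult_pos_neg)
    qed
    moreover have "dim (span {wv s a}) = 1" using w0 by (simp add: dim_span dim_singleton)
    ultimately show ?thesis unfolding D_def
      by (intro CollectI exI[of _ "span {wv s a}"]) (simp add: subspace_span)
  qed
  moreover have "d \<le> 1" if "d \<in> D" for d
  proof (rule ccontr)
    assume "\<not> d \<le> 1"
    from that obtain V where V: "d = dim V" "subspace V" "\<forall>x\<in>V. x \<noteq> 0 \<longrightarrow> qform (Gm s a) x < 0"
      unfolding D_def by blast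
    define W where "W = {x::real^'n. axis s 1 \<bullet> x = 0}"
    have sW: "subspace W" unfolding W_def by (rule subspace_hyperplane)
    have dW: "dim W = CARD('n) - 1" unfolding W_def
      by (subst dim_hyperplane) (auto simp: axis_eq_0_iff)
    have "dim {x + y |x y. x \<in> V \<and> y \<in> W} + dim (V \<inter> W) = dim V + dim W"
      by (rule dim_sums_Int[OF V(2) sW])
    moreover have "dim {x + y |x y. x \<in> V \<and> y \<in> W} \<le> CARD('n)"
      using dim_subset_UNIV[of "{x + y |x y. x \<in> V \<and> y \<in> W}"] by simp
    ultimately have "dim (V \<inter> W) \<ge> 1" using \<open>\<not> d \<le> 1\<close> V(1) dW by linarith
    then have "\<not> V \<inter> W \<subseteq> {0}"
    proof -
      have "V \<inter> W \<subseteq> {0} \<Longrightarrow> dim (V \<inter> W) \<le> dim {0::real^'n}" by (rule dim_subset)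
      moreover have "dim {0::real^'n} = 0" by (simp add: dim_singleton)
      ultimately show ?thesis using \<open>dim (V \<inter> W) \<ge> 1\<close> by linarith
    qed
    then obtain x where x: "x \<in> V" "x \<in> W" "x \<noteq> 0" by blast
    then have xs: "x$s = 0" by (simp add: W_def inner_axis')
    have "qform (Gm s a) x = (\<Sum>q\<in>UNIV. (x$q)^2)" using xs by (simp add: qform_Gm)
    also have "\<dots> > 0"
    proof -
      from x(3) obtain q where "x$q \<noteq> 0" by (auto simp: vec_eq_iff)
      then have "0 < (x$q)^2" by simp
      also have "\<dots> \<le> (\<Sum>q\<in>UNIV. (x$q)^2)" by (rule member_le_sum) auto
      finally show ?thesis .
    qed
    finally show False using V(3) x by fastforce
  qed
  moreover have "finite D"
    by (rule finite_subset[of _ "{..1}"]) (use calculation in auto)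
  ultimately have "Max D = 1" by (intro Max_eqI) auto
  then show ?thesis unfolding neg_index_def D_def .
qed



lemma pm_Gm:
  fixes s :: "'n::finite"
  shows "principal_minor (Gm s a) S = (if s \<in> S then 1 - a^2 * real (card S - 1) else 1)"
proof -
  define c where "c j = (if s \<in> S \<and> j \<in> S then a else 0)" for j
  have M: "(\<chi> i j. if i \<in> S \<and> j \<in> S then Gm s a $i$j else if i = j then 1 else 0 :: real^'n^'n)
      = (\<chi> i j. if i = j then 1 else if i = s then c j else if j = s then c i else 0)"
    by (auto simp: vec_eq_iff Gm_def c_def)
  have "principal_minor (Gm s a) S = 1 - (\<Sum>j\<in>UNIV-{s}. (c j)^2)"
    unfolding principal_minor_det M by (rule det_arrow)
  also have "(\<Sum>j\<in>UNIV-{s}. (c j)^2) = (if s \<in> S then a^2 * real (card S - 1) else 0)"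
  proof (cases "s \<in> S")
    case True
    have "(\<Sum>j\<in>UNIV-{s}. (c j)^2) = (\<Sum>j\<in>S-{s}. a^2)"
      by (rule sum.mono_neutral_cong_right) (auto simp: c_def True)
    also have "\<dots> = a^2 * real (card S - 1)" using True by (simp add: card_Diff_singleton)
    finally show ?thesis using True by simp
  qed (simp add: c_def)
  finally show ?thesis by simp
qed



lemma sep_pow:
  fixes M :: real
  assumes "M \<ge> 2" "(i::nat) \<noteq> j"
  shows "M^i \<ge> M * M^j \<or> M^j \<ge> M * M^i"
proof (cases "j < i")
  case True
  have "M^i = M^j * M^(i-j)" using True by (simp add: power_add[symmetric])
  moreover have "M^(i-j) \<ge> M^1" using True assms by (intro power_increasing) auto
  ultimately have "M^i \<ge> M * M^j" using assms
    by (simp add: mult.commute mult_left_mono)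
  then show ?thesis by simp
next
  case False
  then have "i < j" using assms by simp
  have "M^j = M^i * M^(j-i)" using \<open>i<j\<close> by (simp add: power_add[symmetric])
  moreover have "M^(j-i) \<ge> M^1" using \<open>i<j\<close> assms by (intro power_increasing) auto
  ultimately have "M^j \<ge> M * M^i" using assms
    by (simp add: mult.commute mult_left_mono)
  then show ?thesis by simp
qed

lemma sq4: "(x::real) \<ge> 2 * y \<Longrightarrow> y \<ge> 0 \<Longrightarrow> x^2 \<ge> 4 * y^2"
proof -
  assume "x \<ge> 2 * y" "y \<ge> 0"
  then have "(2*y) * (2*y) \<le> x * x" by (intro mult_mono) auto
  then show ?thesis by (simp add: power2_eq_square)
qed

lemma key_sep1:
  fixes x y M :: real
  assumes "M \<ge> 2" "x > 0" "y > 0" "x \<ge> M * y"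
  shows "x^2 - y^2 > 0" "M * (x * y) \<le> 2 * (x^2 - y^2)"
proof -
  have "2 * y \<le> M * y" using assms by (intro mult_right_mono) auto
  then have "x \<ge> 2 * y" using assms by linarith
  then have x4: "x^2 \<ge> 4 * y^2" using assms sq4 by simp
  have "y^2 > 0" using assms by simp
  then show "x^2 - y^2 > 0" using x4 by linarith
  have "M * (x * y) = (M * y) * x" by simp
  also have "\<dots> \<le> x * x" using assms by (intro mult_right_mono) auto
  finally show "M * (x * y) \<le> 2 * (x^2 - y^2)" using x4 \<open>y^2 > 0\<close> by (simp add: power2_eq_square)
qed

lemma key_sep:
  fixes x y M :: real
  assumes "M \<ge> 2" "x > 0" "y > 0" "x \<ge> M * y \<or> y \<ge> M * x"
  shows "x^2 - y^2 \<noteq> 0" "M * \<bar>x * y\<bar> \<le> 2 * \<bar>x^2 - y^2\<bar>"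
proof -
  have xy: "\<bar>x * y\<bar> = x * y" using assms by simp
  have "(x^2 - y^2 > 0 \<and> M*(x*y) \<le> 2*(x^2-y^2)) \<or> (y^2 - x^2 > 0 \<and> M*(y*x) \<le> 2*(y^2-x^2))"
    using assms(4) key_sep1[OF assms(1-3)] key_sep1[OF assms(1) assms(3) assms(2)] by blast
  then show "x^2 - y^2 \<noteq> 0" "M * \<bar>x * y\<bar> \<le> 2 * \<bar>x^2 - y^2\<bar>"
    unfolding xy by (auto simp: mult.commute)
qed

lemma E1:
  fixes x y M :: real
  assumes "M \<ge> 2" "x > 0" "y > 0" "x \<ge> M * y \<or> y \<ge> M * x"
  shows "\<bar>2 * x * (x * 0 - y) / (x^2 - y^2)\<bar> \<le> 4 / M"
proof -
  have d: "\<bar>x^2 - y^2\<bar> > 0" using key_sep(1)[OF assms] by simp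
  have "\<bar>2 * x * (x * 0 - y) / (x^2 - y^2)\<bar> = 2 * \<bar>x*y\<bar> / \<bar>x^2 - y^2\<bar>"
    by (simp add: abs_mult abs_divide)
  also have "\<dots> \<le> 4 / M"
    using key_sep(2)[OF assms] d assms(1) by (simp add: divide_simps)
  finally show ?thesis .
qed

lemma E2aux:
  fixes x M a :: real
  assumes "M \<ge> 2" "x \<ge> M" "\<bar>a\<bar> \<le> 2"
  shows "2 * \<bar>a - x\<bar> / (x^2 - 1) \<le> 12 / M"
proof -
  have x2: "x \<ge> 2" using assms by simp
  have "x^2 \<ge> 4 * 1^2" using sq4[of 1 x] x2 by simp
  then have d: "x^2 - 1 > 0" by simp
  have ax: "\<bar>a - x\<bar> \<le> x + 2" using assms by simp
  have "(x-2)*(10*x+16) \<ge> 0" using x2 by (intro mult_nonneg_nonneg) auto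
  then have "2 * x * (x + 2) \<le> 12 * (x^2 - 1)" by (simp add: algebra_simps power2_eq_square)
  have "2 * \<bar>a - x\<bar> * M \<le> 2 * (x + 2) * x"
    using ax assms by (intro mult_mono) auto
  also have "\<dots> \<le> 12 * (x^2 - 1)" using \<open>2 * x * (x + 2) \<le> 12 * (x^2 - 1)\<close> by (simp add: algebra_simps)
  finally show ?thesis using d assms(1) by (simp add: divide_simps mult.commute)
qed

lemma E2:
  fixes x M a :: real
  assumes "M \<ge> 2" "x \<ge> M" "\<bar>a\<bar> \<le> 2"
  shows "\<bar>2 * x * (x * a - 1) / (x^2 - 1^2) - 2 * a\<bar> \<le> 12 / M"
proof -
  have x2: "x \<ge> 2" using assms by simp
  have "x^2 \<ge> 4 * 1^2" using sq4[of 1 x] x2 by simp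
  then have d: "x^2 - 1 > 0" by simp
  have e1: "2 * x * (x * a - 1) / (x^2 - 1^2) - 2 * a = 2 * (a - x) / (x^2 - 1)"
    using d by (simp add: field_simps power2_eq_square)
  have e2: "\<bar>2 * (a - x) / (x^2 - 1)\<bar> = \<bar>2 * (a - x)\<bar> / (x^2 - 1)" using d by (simp add: abs_divide)
  have e3: "\<bar>2 * (a - x)\<bar> = 2 * \<bar>a - x\<bar>" by (simp only: abs_mult)
  show ?thesis unfolding e1 e2 e3 using E2aux[OF assms] .
qed

lemma E3:
  fixes y M a :: real
  assumes "M \<ge> 2" "y \<ge> M" "\<bar>a\<bar> \<le> 2"
  shows "\<bar>2 * 1 * (1 * a - y) / (1^2 - y^2)\<bar> \<le> 12 / M"
proof -
  have x2: "y \<ge> 2" using assms by simp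
  have "y^2 \<ge> 4 * 1^2" using sq4[of 1 y] x2 by simp
  then have d: "y^2 - 1 > 0" by simp
  have e1: "2 * 1 * (1 * a - y) / (1^2 - y^2) = 2 * (y - a) / (y^2 - 1)"
    using d by (simp add: field_simps)
  have e2: "\<bar>2 * (y - a) / (y^2 - 1)\<bar> = \<bar>2 * (y - a)\<bar> / (y^2 - 1)" using d by (simp add: abs_divide)
  have e3: "\<bar>2 * (y - a)\<bar> = 2 * \<bar>a - y\<bar>" by (simp only: abs_mult abs_minus_commute[of y])
  show ?thesis unfolding e1 e2 e3 using E2aux[OF assms] .
qed



lemma Neps:
  fixes N e :: real
  assumes "N \<ge> 2" "e = 1/(15*N^2)"
  shows "N * e = 1/(15*N)" "N * e \<le> 1/30" "e \<le> N * e" "e > 0"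
proof -
  show "N * e = 1/(15*N)" using assms by (simp add: power2_eq_square field_simps)
  moreover have "1/(15*N) \<le> 1/30" using assms by (simp add: field_simps)
  ultimately show "N * e \<le> 1/30" by simp
  show "e > 0" using assms by simp
  then show "e \<le> N * e" using assms by (intro mult_right_mono[of 1 N e, simplified]) auto
qed

lemma rowp_ineq:
  fixes N a b e E F hs :: real
  assumes N: "N \<ge> 2" and a: "a > 0" "a^2 = 2*b" "a \<le> 2" "a \<ge> 1/N"
    and e: "e = 1/(15*N^2)" and E: "\<bar>E\<bar> \<le> N*e" and F: "0 \<le> F" "F \<le> N*e^2"
    and hs: "\<bar>hs - 2*a\<bar> \<le> e"
  shows "b * (1 + F) < (a + a*E - hs)^2"
proof -
  note ne = Neps[OF N e]
  have aE: "\<bar>a*E\<bar> \<le> 2 * (N*e)"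
  proof -
    have "\<bar>a*E\<bar> = a * \<bar>E\<bar>" using a by (simp add: abs_mult)
    also have "\<dots> \<le> 2 * (N*e)" using a E by (intro mult_mono) auto
    finally show ?thesis .
  qed
  define \<eta> where "\<eta> = a*E - (hs - 2*a)"
  have "\<bar>\<eta>\<bar> \<le> 3 * (N*e)" using aE hs ne unfolding \<eta>_def by linarith
  also have "\<dots> = 1/(5*N)" using ne by simp
  also have "\<dots> \<le> a/5" using a N by (simp add: field_simps)
  finally have eta: "\<bar>\<eta>\<bar> \<le> a/5" .
  have eq: "a + a*E - hs = \<eta> - a" unfolding \<eta>_def by simp
  have "(4*a/5)^2 \<le> (a - \<eta>)^2" using eta a by (intro power_mono) auto
  then have low: "16/25 * a^2 \<le> (a + a*E - hs)^2" unfolding eq by (simp add: power2_eq_square algebra_simps)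
  have "F \<le> (N*e) * e" using F by (simp add: power2_eq_square)
  also have "\<dots> \<le> (1/30) * (1/30)" using ne by (intro mult_mono) auto
  finally have F1: "F \<le> 1/10" by simp
  have "b * (1 + F) = a^2/2 * (1 + F)" using a by simp
  also have "\<dots> \<le> a^2/2 * (11/10)" using F1 by (intro mult_left_mono) auto
  also have "\<dots> < 16/25 * a^2" using \<open>a > 0\<close> by simp
  finally show ?thesis using low by linarith
qed

lemma rows_ineq:
  fixes N a b e E F :: real
  assumes N: "N \<ge> 2" and a: "a > 0" "a \<le> 2" and b: "b > 0" "b \<le> 1"
    and e: "e = 1/(15*N^2)" and E: "\<bar>E\<bar> \<le> N*e" and F: "0 \<le> F" "F \<le> N*e^2"
  shows "b * F < (-1 + a*E)^2"
proof -
  note ne = Neps[OF N e]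
  have aE: "\<bar>a*E\<bar> \<le> 2 * (N*e)"
  proof -
    have "\<bar>a*E\<bar> = a * \<bar>E\<bar>" using a by (simp add: abs_mult)
    also have "\<dots> \<le> 2 * (N*e)" using a E by (intro mult_mono) auto
    finally show ?thesis .
  qed
  then have "\<bar>a*E\<bar> \<le> 1/15" using ne by linarith
  then have "(14/15)^2 \<le> (1 - a*E)^2" by (intro power_mono) auto
  then have low: "196/225 \<le> (-1 + a*E)^2" by (simp add: power2_eq_square algebra_simps)
  have "F \<le> (N*e) * e" using F by (simp add: power2_eq_square)
  also have "\<dots> \<le> (1/30) * (1/30)" using ne by (intro mult_mono) auto
  finally have F1: "F \<le> 1/10" by simp
  have "b * F \<le> 1 * (1/10)" using b F F1 by (intro mult_mono) auto
  then show ?thesis using low by linarith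
qed



lemma Q_Gi:
  fixes s :: "'n::finite" and h :: "'n \<Rightarrow> real"
  shows "(\<Sum>q\<in>UNIV. \<Sum>r\<in>UNIV. Gi s a b $ q $ r * h q * h r)
       = (\<Sum>q\<in>UNIV-{s}. (h q)^2) - (\<Sum>q\<in>UNIV. wv s a $ q * h q)^2 / b"
proof -
  define W where "W = (\<Sum>q\<in>UNIV. wv s a $ q * h q)"
  have inner: "(\<Sum>r\<in>UNIV. Gi s a b $ q $ r * h q * h r) = (if q \<noteq> s then (h q)^2 else 0) - (wv s a $ q * h q / b) * W" for q
  proof -
    have "(\<Sum>r\<in>UNIV. Gi s a b $ q $ r * h q * h r) = (\<Sum>r\<in>UNIV. (if r = q \<and> q \<noteq> s then h q * h q else 0) - (wv s a $ q * h q / b) * (wv s a $ r * h r))"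
      by (intro sum.cong) (auto simp: Gi_def algebra_simps)
    also have "\<dots> = (\<Sum>r\<in>UNIV. (if r = q \<and> q \<noteq> s then h q * h q else 0)) - (wv s a $ q * h q / b) * W"
      unfolding W_def by (simp only: sum_subtractf sum_distrib_left)
    also have "(\<Sum>r\<in>UNIV. (if r = q \<and> q \<noteq> s then h q * h q else 0)) = (if q \<noteq> s then (h q)^2 else 0)"
      by (cases "q = s") (auto simp: power2_eq_square)
    finally show ?thesis .
  qed
  have "(\<Sum>q\<in>UNIV. \<Sum>r\<in>UNIV. Gi s a b $ q $ r * h q * h r)
      = (\<Sum>q\<in>UNIV. (if q \<noteq> s then (h q)^2 else 0)) - (\<Sum>q\<in>UNIV. wv s a $ q * h q) / b * W"
    unfolding inner by (simp only: sum_subtractf sum_distrib_right sum_divide_distrib)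
  also have "(\<Sum>q\<in>UNIV. (if q \<noteq> s then (h q)^2 else 0)) = (\<Sum>q\<in>UNIV-{s}. (h q)^2)"
    by (rule sum.mono_neutral_cong_right) auto
  finally show ?thesis unfolding W_def by (simp add: power2_eq_square)
qed

lemma sum_bounds:
  fixes h :: "'a \<Rightarrow> real"
  assumes "finite R" "\<And>q. q \<in> R \<Longrightarrow> \<bar>h q\<bar> \<le> e" "real (card R) \<le> N" "e \<ge> 0"
  shows "\<bar>\<Sum>q\<in>R. h q\<bar> \<le> N * e" "(\<Sum>q\<in>R. (h q)^2) \<le> N * e^2" "0 \<le> (\<Sum>q\<in>R. (h q)^2)"
proof -
  have "\<bar>\<Sum>q\<in>R. h q\<bar> \<le> (\<Sum>q\<in>R. \<bar>h q\<bar>)" by (rule sum_abs)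
  also have "\<dots> \<le> (\<Sum>q\<in>R. e)" using assms by (intro sum_mono) auto
  also have "\<dots> = real (card R) * e" by simp
  also have "\<dots> \<le> N * e" using assms by (intro mult_right_mono) auto
  finally show "\<bar>\<Sum>q\<in>R. h q\<bar> \<le> N * e" .
  have "(\<Sum>q\<in>R. (h q)^2) \<le> (\<Sum>q\<in>R. e^2)"
  proof (intro sum_mono)
    fix q assume "q \<in> R"
    then have "\<bar>h q\<bar>^2 \<le> e^2" using assms by (intro power_mono) auto
    then show "(h q)^2 \<le> e^2" by simp
  qed
  also have "\<dots> = real (card R) * e^2" by simp
  also have "\<dots> \<le> N * e^2" using assms by (intro mult_right_mono) auto
  finally show "(\<Sum>q\<in>R. (h q)^2) \<le> N * e^2" .
  show "0 \<le> (\<Sum>q\<in>R. (h q)^2)" by (intro sum_nonneg) auto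
qed



theorem mainTheorem4:
  assumes "CARD('n::finite) \<ge> 2"
  shows "(Theta :: ((real^'n) \<times> (real^'n^'n)) set) \<noteq> {}"
proof -
  obtain s :: 'n where True by blast
  define N where "N = real CARD('n)"
  have N2: "N \<ge> 2" using assms unfolding N_def by simp
  define b where "b = 1 / (2*N - 3)"
  define a where "a = sqrt (2*b)"
  define M where "M = 180 * N^2"
  define e where "e = 1 / (15 * N^2)"
  define f where "f p = (if p = s then 0 else Suc (to_nat p))" for p
  define lv where "lv = ((\<chi> p. M ^ f p) :: real^'n)"
  define G where "G = Gm s a"
  have b0: "b > 0" "b \<le> 1" using N2 by (auto simp: b_def field_simps)
  have a2: "a^2 = 2*b" using b0 by (simp add: a_def)
  have a0: "a > 0" using b0 by (simp add: a_def)
  have a_le: "a \<le> 2"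
  proof -
    have "a^2 \<le> 2^2" using a2 b0 by simp
    from power2_le_imp_le[OF this] show ?thesis by simp
  qed
  have a_ge: "a \<ge> 1/N"
  proof -
    have h1: "N*N \<ge> 2*N" using N2 by (intro mult_right_mono) auto
    have h2a: "(2*N-3)/2 \<le> N" by simp
    have h2b: "N \<le> N^2" using h1 N2 unfolding power2_eq_square by linarith
    have h2: "(2*N-3)/2 \<le> N^2" using h2a h2b by linarith
    have h3: "(2*N-3)/2 > 0" using N2 by simp
    have "(1/N)^2 = 1/(N^2)" by (simp add: power_divide)
    also have "\<dots> \<le> 1/((2*N-3)/2)" using h2 h3 by (intro divide_left_mono) auto
    also have "\<dots> = a^2" unfolding a2 b_def by simp
    finally have "(1/N)^2 \<le> a^2" .
    from power2_le_imp_le[OF this] a0 show ?thesis by simp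
  qed
  have ab: "(real CARD('n) - 1) * a^2 = 1 + b"
    unfolding a2 b_def N_def[symmetric] using N2 by (simp add: field_simps)
  have "N^2 \<ge> 1" using N2 by (intro one_le_power) simp
  then have M2: "M \<ge> 2" unfolding M_def by simp
  have eM: "e = 12 / M" unfolding e_def M_def using N2 by (simp add: field_simps)
  have e0: "e \<ge> 0" unfolding e_def by simp
  have finj: "f p \<noteq> f q" if "p \<noteq> q" for p q
    using that by (auto simp: f_def)
  have lpos: "lv$p > 0" for p using M2 by (simp add: lv_def)
  have ls: "lv$s = 1" by (simp add: lv_def f_def)
  have lbig: "lv$p \<ge> M" if "p \<noteq> s" for p
  proof -
    have "M^1 \<le> M^f p" using that M2 by (intro power_increasing) (auto simp: f_def)
    then show ?thesis by (simp add: lv_def)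
  qed
  have lsep: "lv$p \<ge> M * lv$q \<or> lv$q \<ge> M * lv$p" if "p \<noteq> q" for p q
    using sep_pow[OF M2 finj[OF that]] by (simp add: lv_def)
  have Ginv: "matrix_inv G = Gi s a b" "invertible G"
    using matrix_inv_eq[OF Gm_Gi[OF ab]] b0 by (auto simp: G_def)
  define H where "H = Hmat lv G"
  have Hd: "H$p$p = 1" for p by (simp add: H_def Hmat_def)
  have H1: "\<bar>H$p$q\<bar> \<le> e" if "p \<noteq> s" "q \<noteq> s" "p \<noteq> q" for p q
  proof -
    have "H$p$q = 2 * lv$p * (lv$p * 0 - lv$q) / ((lv$p)^2 - (lv$q)^2)"
      using that by (simp add: H_def Hmat_def G_def Gm_def)
    also have "\<bar>\<dots>\<bar> \<le> 4 / M" by (rule E1[OF M2 lpos lpos lsep[OF that(3)]])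
    also have "\<dots> \<le> e" unfolding eM using M2 by (simp add: divide_right_mono)
    finally show ?thesis .
  qed
  have H2: "\<bar>H$p$s - 2*a\<bar> \<le> e" if "p \<noteq> s" for p
  proof -
    have "H$p$s = 2 * lv$p * (lv$p * a - 1) / ((lv$p)^2 - 1^2)"
      using that by (simp add: H_def Hmat_def G_def Gm_def ls)
    then show ?thesis using E2[OF M2 lbig[OF that], of a] a0 a_le eM by simp
  qed
  have H3: "\<bar>H$s$q\<bar> \<le> e" if "q \<noteq> s" for q
  proof -
    have "H$s$q = 2 * 1 * (1 * a - lv$q) / (1^2 - (lv$q)^2)"
      using that by (simp add: H_def Hmat_def G_def Gm_def ls)
    then show ?thesis using E3[OF M2 lbig[OF that], of a] a0 a_le eM by simp
  qed
  have cardU: "real (card (UNIV - {s} :: 'n set)) \<le> N"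
    unfolding N_def by (simp add: card_Diff_singleton)
  have rows: "(\<Sum>q\<in>UNIV. \<Sum>r\<in>UNIV. matrix_inv G $ q $ r * H $ p $ q * H $ p $ r) < 0" for p
  proof -
    define X where "X = (\<Sum>q\<in>UNIV-{s}. (H$p$q)^2)"
    define Y where "Y = (\<Sum>q\<in>UNIV. wv s a $ q * H$p$q)"
    have Q: "(\<Sum>q\<in>UNIV. \<Sum>r\<in>UNIV. matrix_inv G $ q $ r * H $ p $ q * H $ p $ r) = X - Y^2 / b"
      unfolding Ginv(1) X_def Y_def by (rule Q_Gi)
    have Yeq: "Y = - H$p$s + a * (\<Sum>q\<in>UNIV-{s}. H$p$q)"
      unfolding Y_def by (subst sum_split_s[of _ s]) (simp add: wv_def sum_distrib_left)
    have "b * X < Y^2"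
    proof (cases "p = s")
      case True
      have hb: "\<bar>H$p$q\<bar> \<le> e" if "q \<in> UNIV - {s}" for q using H3 that True by auto
      note sb = sum_bounds[where R="UNIV-{s}" and h="\<lambda>q. H$p$q" and e=e and N=N, OF _ hb cardU e0, simplified]
      have "b * X < (-1 + a * (\<Sum>q\<in>UNIV-{s}. H$p$q))^2"
        unfolding X_def by (rule rows_ineq[OF N2 a0 a_le b0 e_def sb(1) sb(3) sb(2)])
      then show ?thesis using Yeq True Hd by simp
    next
      case False
      define R where "R = UNIV - {s} - {p}"
      have hb: "\<bar>H$p$q\<bar> \<le> e" if "q \<in> R" for q using H1 that False by (auto simp: R_def)
      have cardR: "real (card R) \<le> N"
      proof -
        have "card R \<le> card (UNIV - {s} :: 'n set)" unfolding R_def by (intro card_mono) auto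
        then show ?thesis using cardU by linarith
      qed
      note sb = sum_bounds[where R="R" and h="\<lambda>q. H$p$q" and e=e and N=N, OF _ hb cardR e0, simplified]
      have pU: "p \<in> UNIV - {s}" using False by simp
      have sumsplit: "(\<Sum>q\<in>UNIV-{s}. g q) = g p + (\<Sum>q\<in>R. g q)" for g :: "'n \<Rightarrow> real"
        unfolding R_def using sum.remove[OF _ pU, of g] by simp
      have X1: "X = 1 + (\<Sum>q\<in>R. (H$p$q)^2)" unfolding X_def sumsplit using Hd by simp
      have Y1: "Y = a + a * (\<Sum>q\<in>R. H$p$q) - H$p$s" unfolding Yeq sumsplit using Hd
        by (simp add: algebra_simps)
      have "b * (1 + (\<Sum>q\<in>R. (H$p$q)^2)) < (a + a * (\<Sum>q\<in>R. H$p$q) - H$p$s)^2"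
        by (rule rowp_ineq[OF N2 a0 a2 a_le a_ge e_def _ _ _ H2[OF False]]) (use sb in \<open>auto simp: R_def\<close>)
      then show ?thesis unfolding X1 Y1 .
    qed
    then have "X < Y^2 / b" using b0 by (simp add: field_simps)
    then show ?thesis unfolding Q by simp
  qed
  have pm: "principal_minor G S > 0" if "2 \<le> card S" "card S \<le> CARD('n) - 1" for S
  proof (cases "s \<in> S")
    case True
    have "real (card S - 1) \<le> N - 2" using that N2 unfolding N_def by linarith
    then have "a^2 * real (card S - 1) \<le> a^2 * (N - 2)" by (intro mult_left_mono) auto
    also have "\<dots> < 1" unfolding a2 b_def using N2 by (simp add: field_simps)
    finally show ?thesis using True by (simp add: G_def pm_Gm)
  qed (simp add: G_def pm_Gm)
  have qpos: "qform G (axis s 1) > 0"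
  proof -
    have "(\<Sum>q\<in>UNIV. (axis s 1 $ q)^2) = (\<Sum>q\<in>UNIV. if q = s then 1 else (0::real))"
      by (intro sum.cong) (auto simp: axis_def)
    also have "\<dots> = 1" by simp
    finally have "(\<Sum>q\<in>UNIV. (axis s 1 $ q)^2) = (1::real)" .
    then show ?thesis by (simp add: G_def qform_Gm axis_def)
  qed
  have qneg: "qform G (wv s a) < 0" using qform_wv[OF ab] b0 by (simp add: G_def)
  have gt: "x > y" if "x \<ge> M * y" "y > 0" for x y :: real
  proof -
    have "M * y \<ge> 2 * y" using M2 that by (intro mult_right_mono) auto
    then show ?thesis using that by linarith
  qed
  have c1: "\<forall>p. lv$p \<noteq> 0" using lpos by (metis less_irrefl)
  have c2: "\<forall>p q. p \<noteq> q \<longrightarrow> lv$p \<noteq> lv$q \<and> lv$p \<noteq> - lv$q"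
  proof (intro allI impI)
    fix p q :: 'n assume pq: "p \<noteq> q"
    show "lv$p \<noteq> lv$q \<and> lv$p \<noteq> - lv$q"
      using lsep[OF pq] gt[of "lv$p" "lv$q"] gt[of "lv$q" "lv$p"] lpos[of p] lpos[of q] by auto
  qed
  have c3: "transpose G = G" by (auto simp: vec_eq_iff transpose_def G_def Gm_def)
  have c4: "\<forall>p. G$p$p = 1" by (simp add: G_def Gm_def)
  have c5: "det G \<noteq> 0" using Ginv(2) invertible_det_nz by blast
  have c6: "\<exists>x. qform G x > 0" using qpos by blast
  have c7: "\<exists>x. qform G x < 0" using qneg by blast
  have c8: "neg_index G = 1" unfolding G_def by (rule neg_index_Gm[OF ab b0(1)])
  have c9: "\<forall>S. 2 \<le> card S \<and> card S \<le> CARD('n) - 1 \<longrightarrow> principal_minor G S > 0"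
    using pm by blast
  have c10: "\<forall>p. (\<Sum>q\<in>UNIV. \<Sum>r\<in>UNIV. matrix_inv G $ q $ r * Hmat lv G $ p $ q * Hmat lv G $ p $ r) < 0"
    using rows by (simp add: H_def)
  have "(lv, G) \<in> Theta"
    unfolding Theta_def mem_Collect_eq case_prod_conv
    using c1 c2 c3 c4 c5 c6 c7 c8 c9 c10 by blast
  then show ?thesis by blast
qed

end
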